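(* Let $k$ be a non-archimedean local field of residue characteristic $2$ with ring of integers $\mathfrak o$ and uniformizer $\varpi$. Let $\rho\in\mathfrak o$, $\ell\ge0$ an integer, and $X=\operatorname{meas}\{x\in\mathfrak o: x^2\equiv\rho \bmod \varpi^\ell\}$. Write $\rho=\eta^2+b$, where $b\mathfrak o$ is the quadratic defect of $\rho$. Then: (1) if $b\not\equiv0\bmod\varpi^\ell$, then $X=0$; (2) if $b\equiv0\bmod\varpi^\ell$ and $|\varpi^\ell|<|4\eta^2|$, then $X=2\,|\varpi^\ell/(2\eta)|$; (3) otherwise, $X=|\varpi|^{\lceil \ell/2\rceil}$.
   Context: The measure on $\mathfrak o$ is the additive Haar measure with $\mathfrak o$ of volume $1$; $|\cdot|$ is normalized by $|\varpi|=q^{-1}$, $q$ the residue field cardinality. The quadratic defect of $\rho\in k$ is the intersection of all ideals $b\mathfrak o$ over those $b\in k$ for which $\rho-b$ is a square in $k$ (it is $0$ when $\rho$ is a square). *)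

theory Defs
  imports "HOL-Analysis.Analysis"
begin

text \<open>A non-archimedean local field is modelled as a field type 'a together with an
absolute value av.  The valuation ring, its ideals, residue field, etc. are
expressed as subsets of 'a.\<close>

definition vring :: "('a::field \<Rightarrow> real) \<Rightarrow> 'a set" where
  "vring av = {x. av x \<le> 1}"

definition pideal :: "('a::field \<Rightarrow> real) \<Rightarrow> 'a \<Rightarrow> 'a set" where
  "pideal av c = {c * x | x. x \<in> vring av}"

text \<open>residue field o/p, as the set of residue classes x + p, x in o\<close>
definition residue_field :: "('a::field \<Rightarrow> real) \<Rightarrow> 'a set set" where
  "residue_field av = (\<lambda>x. {y \<in> vring av. av (y - x) < 1}) ` vring av"

definition nonarch_local_field :: "('a::field \<Rightarrow> real) \<Rightarrow> bool" where
  "nonarch_local_field av \<longleftrightarrow>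
     (\<forall>x. 0 \<le> av x) \<and> (\<forall>x. av x = 0 \<longleftrightarrow> x = 0) \<and>
     (\<forall>x y. av (x * y) = av x * av y) \<and>
     (\<forall>x y. av (x + y) \<le> max (av x) (av y)) \<and>
     \<comment> \<open>discretely valued, nontrivial\<close>
     (\<exists>p. 0 < av p \<and> av p < 1 \<and> (\<forall>x. av x < 1 \<longrightarrow> av x \<le> av p)) \<and>
     \<comment> \<open>finite residue field\<close>
     finite (residue_field av) \<and>
     \<comment> \<open>complete\<close>
     (\<forall>f::nat \<Rightarrow> 'a. (\<forall>e>0. \<exists>N. \<forall>m\<ge>N. \<forall>n\<ge>N. av (f m - f n) < e) \<longrightarrow>
        (\<exists>L. \<forall>e>0. \<exists>N. \<forall>n\<ge>N. av (f n - L) < e))"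

definition normalized_uniformizer :: "('a::field \<Rightarrow> real) \<Rightarrow> 'a \<Rightarrow> bool" where
  "normalized_uniformizer av w \<longleftrightarrow>
     av w < 1 \<and> (\<forall>x. av x < 1 \<longrightarrow> av x \<le> av w) \<and>
     av w = 1 / real (card (residue_field av))"

definition normalized_haar :: "('a::field \<Rightarrow> real) \<Rightarrow> 'a measure \<Rightarrow> bool" where
  "normalized_haar av M \<longleftrightarrow>
     space M = vring av \<and>
     sets M = sigma_sets (vring av) {{x \<in> vring av. av (x - a) \<le> r} | a r. a \<in> vring av} \<and>
     emeasure M (vring av) = 1 \<and>
     (\<forall>A \<in> sets M. \<forall>a \<in> vring av.
        (\<lambda>x. x + a) ` A \<in> sets M \<and> emeasure M ((\<lambda>x. x + a) ` A) = emeasure M A)"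

definition quadratic_defect :: "('a::field \<Rightarrow> real) \<Rightarrow> 'a \<Rightarrow> 'a set" where
  "quadratic_defect av rho = \<Inter> {pideal av c | c. \<exists>y. rho - c = y ^ 2}"

end

theory Submission
  imports Defs
begin

locale lf =
  fixes av :: "'a::field \<Rightarrow> real" and w :: 'a and M :: "'a measure"
  assumes nlf: "nonarch_local_field av" and nu: "normalized_uniformizer av w"
    and nh: "normalized_haar av M"
begin

lemma nonneg: "0 \<le> av x" using nlf[unfolded nonarch_local_field_def, THEN conjunct1] by blast
lemma zero_iff: "av x = 0 \<longleftrightarrow> x = 0" using nlf[unfolded nonarch_local_field_def, THEN conjunct2, THEN conjunct1] by blast
lemma mult: "av (x * y) = av x * av y" using nlf[unfolded nonarch_local_field_def, THEN conjunct2, THEN conjunct2, THEN conjunct1] by blast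
lemma ultra: "av (x + y) \<le> max (av x) (av y)" using nlf[unfolded nonarch_local_field_def, THEN conjunct2, THEN conjunct2, THEN conjunct2, THEN conjunct1] by blast
lemma av0[simp]: "av 0 = 0" using zero_iff by simp
lemma av1[simp]: "av 1 = 1"
proof -
  have "av 1 = av 1 * av 1" using mult[of 1 1] by simp
  moreover have "av 1 \<noteq> 0" using zero_iff by simp
  ultimately show ?thesis
    by (metis nonzero_mult_div_cancel_right div_self)
qed
lemma av_minus1: "av (-1) = 1"
proof -
  have "av (-1) * av (-1) = 1" using mult[of "-1" "-1"] by simp
  then have "(av (-1) - 1) * (av (-1) + 1) = 0" by (simp add: algebra_simps)
  moreover have "av (-1) + 1 \<noteq> 0" using nonneg[of "-1"] by linarith
  ultimately show ?thesis by simp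
qed
lemma av_minus[simp]: "av (- x) = av x"
  using mult[of "-1" x] av_minus1 by simp
lemma av_sym: "av (x - y) = av (y - x)"
  by (metis av_minus minus_diff_eq)
lemma ultra_diff: "av (x - y) \<le> max (av x) (av y)"
  using ultra[of x "-y"] by simp
lemma av_inverse: "av (inverse x) = inverse (av x)"
proof (cases "x = 0")
  case False
  then have "av x * av (inverse x) = 1" using mult[of x "inverse x"] by simp
  thus ?thesis by (simp add: field_simps) (metis mult.commute nonzero_eq_divide_eq zero_neq_one mult_zero_left)
qed simp
lemma av_divide: "av (x / y) = av x / av y"
  by (simp add: divide_inverse mult av_inverse)
lemma av_power: "av (x ^ n) = av x ^ n"
  by (induction n) (simp_all add: mult)
lemma strict: assumes "av a < av b" shows "av (b + a) = av b"
proof -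
  have 1: "av (b + a) \<le> av b" using ultra[of b a] assms by simp
  have "av b \<le> max (av (b + a)) (av a)" using ultra[of "b + a" "-a"] by simp
  thus ?thesis using 1 assms by linarith
qed

lemma pideal_iff: "x \<in> pideal av c \<longleftrightarrow> av x \<le> av c"
proof (cases "c = 0")
  case True
  have "x \<in> pideal av c \<longleftrightarrow> x = 0" unfolding pideal_def vring_def using True
    by (auto intro: exI[of _ 0])
  moreover have "av x \<le> av c \<longleftrightarrow> x = 0" using True zero_iff[of x] nonneg[of x] by auto
  ultimately show ?thesis by simp
next
  case False
  show ?thesis
  proof
    assume "x \<in> pideal av c"
    then obtain y where "av y \<le> 1" "x = c * y" unfolding pideal_def vring_def by auto
    thus "av x \<le> av c" using mult[of c y] nonneg[of c]
      by (simp add: mult_left_le)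
  next
    assume a: "av x \<le> av c"
    have "0 < av c" using False zero_iff[of c] nonneg[of c] by linarith
    then have "av (x / c) \<le> 1" using a by (simp add: av_divide divide_le_eq_1)
    moreover have "x = c * (x / c)" using False by simp
    ultimately show "x \<in> pideal av c" unfolding pideal_def vring_def by blast
  qed
qed

lemma vring_iff: "x \<in> vring av \<longleftrightarrow> av x \<le> 1" unfolding vring_def by simp

abbreviation "q \<equiv> card (residue_field av)"

lemma w_props: "av w < 1" "\<And>x. av x < 1 \<Longrightarrow> av x \<le> av w" "av w = 1 / real q"
  using nu unfolding normalized_uniformizer_def by auto

lemma RF_fin: "finite (residue_field av)" using nlf[unfolded nonarch_local_field_def, THEN conjunct2, THEN conjunct2, THEN conjunct2, THEN conjunct2, THEN conjunct2, THEN conjunct1] .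
lemma RF_ne: "residue_field av \<noteq> {}"
  unfolding residue_field_def vring_def by (auto intro: exI[of _ 0])
lemma q_pos: "q > 0" using RF_fin RF_ne by (simp add: card_gt_0_iff)
lemma w_pos: "0 < av w" using w_props(3) q_pos by simp
lemma w_ne: "w \<noteq> 0" using w_pos by auto

lemma value_aux: "x \<noteq> 0 \<Longrightarrow> av x \<le> 1 \<Longrightarrow> av w ^ n < av x \<Longrightarrow> \<exists>k. av x = av w ^ k"
proof (induction n arbitrary: x)
  case 0 then show ?case by simp
next
  case (Suc n)
  show ?case
  proof (cases "av w ^ n < av x")
    case True then show ?thesis using Suc by blast
  next
    case False
    define u where "u = x / w ^ n"
    have pn: "0 < av w ^ n" using w_pos by simp
    have au: "av u = av x / av w ^ n" unfolding u_def by (simp add: av_divide av_power)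
    have "av u \<le> 1" using False au pn by (simp add: divide_le_eq_1)
    moreover have "av w < av u" using Suc.prems(3) au pn by (simp add: less_divide_eq mult.commute)
    ultimately have "av u = 1" using w_props(2)[of u] by force
    then show ?thesis using au pn by (intro exI[of _ n]) (simp add: divide_eq_1_iff)
  qed
qed

lemma val_pow: assumes "x \<noteq> 0" "av x \<le> 1" shows "\<exists>k. av x = av w ^ k"
proof -
  have "0 < av x" using assms zero_iff nonneg by (metis less_eq_real_def)
  then obtain n where "av w ^ n < av x" using real_arch_pow_inv w_props(1) by blast
  then show ?thesis by (rule value_aux[OF assms])
qed

lemma vring_add: "x \<in> vring av \<Longrightarrow> y \<in> vring av \<Longrightarrow> x + y \<in> vring av"
  unfolding vring_iff using ultra[of x y] by simp
lemma vring_diff: "x \<in> vring av \<Longrightarrow> y \<in> vring av \<Longrightarrow> x - y \<in> vring av"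
  unfolding vring_iff using ultra_diff[of x y] by simp

lemma space_M: "space M = vring av" using nh[unfolded normalized_haar_def, THEN conjunct1] .
lemma sets_M: "sets M = sigma_sets (vring av) {{x \<in> vring av. av (x - a) \<le> r} | a r. a \<in> vring av}"
  using nh[unfolded normalized_haar_def, THEN conjunct2, THEN conjunct1] .
lemma M_total: "emeasure M (vring av) = 1" using nh[unfolded normalized_haar_def, THEN conjunct2, THEN conjunct2, THEN conjunct1] .
lemma M_inv: "A \<in> sets M \<Longrightarrow> a \<in> vring av \<Longrightarrow> emeasure M ((\<lambda>x. x + a) ` A) = emeasure M A"
  using nh[unfolded normalized_haar_def, THEN conjunct2, THEN conjunct2, THEN conjunct2] by blast

lemma fm: "finite_measure M"
  by (rule finite_measureI) (simp add: space_M M_total)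

abbreviation B :: "'a \<Rightarrow> real \<Rightarrow> 'a set" where
  "B c r \<equiv> {x \<in> vring av. av (x - c) \<le> r}"

lemma B_sets: "c \<in> vring av \<Longrightarrow> B c r \<in> sets M"
  unfolding sets_M by (rule sigma_sets.Basic) blast

lemma B_img: assumes "c \<in> vring av" shows "(\<lambda>x. x + c) ` B 0 r = B c r"
proof
  show "(\<lambda>x. x + c) ` B 0 r \<subseteq> B c r" using assms vring_add by auto
  show "B c r \<subseteq> (\<lambda>x. x + c) ` B 0 r"
  proof
    fix x assume "x \<in> B c r"
    then have "x - c \<in> B 0 r" "x = (x - c) + c" using vring_diff assms by auto
    then show "x \<in> (\<lambda>x. x + c) ` B 0 r" by blast
  qed
qed

lemma B_meas: assumes "c \<in> vring av" shows "measure M (B c r) = measure M (B 0 r)"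
proof -
  have "emeasure M (B c r) = emeasure M (B 0 r)"
    using M_inv[OF B_sets[of 0 r] assms] B_img[OF assms] by (simp add: vring_iff)
  then show ?thesis unfolding measure_def by simp
qed

lemma B_one: "B 0 1 = vring av" by (auto simp: vring_iff)

lemma meas_B0: "measure M (B 0 1) = 1"
  using M_total B_one unfolding measure_def by simp

abbreviation cls :: "'a \<Rightarrow> 'a set" where
  "cls c \<equiv> {y \<in> vring av. av (y - c) < 1}"

lemma RF_def': "residue_field av = cls ` vring av" unfolding residue_field_def by simp

lemma cls_eq: assumes "z \<in> cls c" shows "cls c = cls z"
proof -
  have "\<And>y. av (y - z) < 1 \<longleftrightarrow> av (y - c) < 1"
  proof -
    fix y
    have zc: "av (z - c) < 1" "av (c - z) < 1" using assms av_sym[of z c] by auto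
    have "av (y - z) \<le> max (av (y - c)) (av (c - z))" using ultra[of "y - c" "c - z"] by simp
    moreover have "av (y - c) \<le> max (av (y - z)) (av (z - c))" using ultra[of "y - z" "z - c"] by simp
    ultimately show "av (y - z) < 1 \<longleftrightarrow> av (y - c) < 1" using zc by auto
  qed
  then show ?thesis by auto
qed

lemma RF_disj: assumes "C1 \<in> residue_field av" "C2 \<in> residue_field av" "C1 \<noteq> C2"
  shows "C1 \<inter> C2 = {}"
proof (rule ccontr)
  assume "C1 \<inter> C2 \<noteq> {}"
  then obtain z where z: "z \<in> C1" "z \<in> C2" by blast
  obtain c1 c2 where "C1 = cls c1" "C2 = cls c2" using assms RF_def' by auto
  then have "C1 = cls z" "C2 = cls z" using cls_eq z by auto
  then show False using assms(3) by simp
qed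

lemma img_cls: assumes "c \<in> vring av"
  shows "(\<lambda>y. w^n * y) ` cls c = B (w^n * c) (av w ^ Suc n)"
proof
  have pn: "0 < av w ^ n" "av w ^ n \<le> 1" using w_pos w_props(1) by (auto simp: power_le_one)
  show "(\<lambda>y. w^n * y) ` cls c \<subseteq> B (w^n * c) (av w ^ Suc n)"
  proof
    fix x assume "x \<in> (\<lambda>y. w^n * y) ` cls c"
    then obtain y where y: "y \<in> vring av" "av (y - c) < 1" "x = w^n * y" by auto
    have "av (y - c) \<le> av w" using w_props(2) y(2) by blast
    have "x - w^n * c = w^n * (y - c)" using y(3) by (simp add: right_diff_distrib)
    then have "av (x - w^n * c) = av w ^ n * av (y - c)" by (simp add: mult av_power)
    also have "\<dots> \<le> av w ^ n * av w" using \<open>av (y - c) \<le> av w\<close> pn by (intro mult_left_mono) auto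
    finally have "av (x - w^n * c) \<le> av w ^ Suc n" by (simp add: mult.commute)
    moreover have "av w ^ n * av y \<le> 1" using y(1) pn nonneg[of y] by (simp add: vring_iff mult_le_one)
    then have "av x \<le> 1" using y(3) by (simp add: mult av_power)
    ultimately show "x \<in> B (w^n * c) (av w ^ Suc n)" by (simp add: vring_iff)
  qed
  show "B (w^n * c) (av w ^ Suc n) \<subseteq> (\<lambda>y. w^n * y) ` cls c"
  proof
    fix x assume x: "x \<in> B (w^n * c) (av w ^ Suc n)"
    define y where "y = x / w^n"
    have wn: "w ^ n \<noteq> 0" using w_ne by simp
    have "y - c = (x - w^n * c) / w^n" unfolding y_def using wn by (simp add: field_simps)
    then have "av (y - c) = av (x - w^n * c) / av w ^ n" by (simp add: av_divide av_power)
    also have "\<dots> \<le> av w" using x pn by (simp add: divide_le_eq mult.commute)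
    finally have yc: "av (y - c) \<le> av w" .
    then have "av (y - c) < 1" using w_props(1) by simp
    moreover have "av y \<le> 1" using ultra[of "y - c" c] yc w_props(1) assms by (simp add: vring_iff)
    moreover have "x = w^n * y" unfolding y_def using wn by simp
    ultimately show "x \<in> (\<lambda>y. w^n * y) ` cls c" by (auto simp: vring_iff)
  qed
qed

lemma B_union: "B 0 (av w ^ n) = (\<Union>C\<in>residue_field av. (\<lambda>y. w^n * y) ` C)"
proof
  have pn: "0 < av w ^ n" "av w ^ n \<le> 1" using w_pos w_props(1) by (auto simp: power_le_one)
  have wn: "w ^ n \<noteq> 0" using w_ne by simp
  show "B 0 (av w ^ n) \<subseteq> (\<Union>C\<in>residue_field av. (\<lambda>y. w^n * y) ` C)"
  proof
    fix x assume x: "x \<in> B 0 (av w ^ n)"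
    define y where "y = x / w^n"
    have "av y \<le> 1" unfolding y_def using x pn by (simp add: av_divide av_power divide_le_eq)
    then have "y \<in> cls y" "cls y \<in> residue_field av" by (auto simp: RF_def' vring_iff)
    moreover have "x = w^n * y" unfolding y_def using wn by simp
    ultimately show "x \<in> (\<Union>C\<in>residue_field av. (\<lambda>y. w^n * y) ` C)" by blast
  qed
  show "(\<Union>C\<in>residue_field av. (\<lambda>y. w^n * y) ` C) \<subseteq> B 0 (av w ^ n)"
  proof
    fix x assume "x \<in> (\<Union>C\<in>residue_field av. (\<lambda>y. w^n * y) ` C)"
    then obtain c y where "c \<in> vring av" "y \<in> cls c" "x = w^n * y" by (auto simp: RF_def')
    then have "av y \<le> 1" "av x = av w ^ n * av y" by (auto simp: vring_iff mult av_power)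
    then show "x \<in> B 0 (av w ^ n)" using pn nonneg[of y]
      by (simp add: vring_iff mult_le_one mult_left_le)
  qed
qed

lemma step: "measure M (B 0 (av w ^ n)) = real q * measure M (B 0 (av w ^ Suc n))"
proof -
  interpret finite_measure M by (rule fm)
  let ?A = "\<lambda>C. (\<lambda>y. w^n * y) ` C"
  have wn: "w ^ n \<noteq> 0" using w_ne by simp
  have A: "\<And>C. C \<in> residue_field av \<Longrightarrow> \<exists>c\<in>vring av. ?A C = B (w^n * c) (av w ^ Suc n) \<and> w^n * c \<in> vring av"
  proof -
    fix C assume "C \<in> residue_field av"
    then obtain c where c: "c \<in> vring av" "C = cls c" by (auto simp: RF_def')
    have "av w ^ n \<le> 1" using w_props(1) w_pos by (simp add: power_le_one)
    then have "av w ^ n * av c \<le> 1" using c(1) nonneg[of c] by (simp add: vring_iff mult_le_one)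
    then have "w ^ n * c \<in> vring av" by (simp add: vring_iff mult av_power)
    then show "\<exists>c\<in>vring av. ?A C = B (w^n * c) (av w ^ Suc n) \<and> w^n * c \<in> vring av"
      using img_cls c by blast
  qed
  have sets: "?A ` residue_field av \<subseteq> sets M" using A B_sets by fastforce
  have disj: "disjoint_family_on ?A (residue_field av)"
    unfolding disjoint_family_on_def
  proof (intro ballI impI)
    fix C1 C2 assume "C1 \<in> residue_field av" "C2 \<in> residue_field av" "C1 \<noteq> C2"
    then have "C1 \<inter> C2 = {}" by (rule RF_disj)
    then show "?A C1 \<inter> ?A C2 = {}" using wn by auto
  qed
  have "measure M (B 0 (av w ^ n)) = (\<Sum>C\<in>residue_field av. measure M (?A C))"
    unfolding B_union by (rule finite_measure_finite_Union[OF RF_fin sets disj])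
  also have "\<dots> = (\<Sum>C\<in>residue_field av. measure M (B 0 (av w ^ Suc n)))"
    using A B_meas by (intro sum.cong) fastforce+
  finally show ?thesis by simp
qed

lemma meas_ball0: "measure M (B 0 (av w ^ n)) = av w ^ n"
proof (induction n)
  case 0 then show ?case using meas_B0 by simp
next
  case (Suc n)
  define m where "m = measure M (B 0 (av w ^ Suc n))"
  have "av w ^ n = real q * m" using Suc step unfolding m_def by simp
  moreover have "av w * real q = 1" using w_props(3) q_pos by simp
  ultimately have "m = av w ^ n * av w"
    by (metis mult.assoc mult.commute mult.left_neutral)
  then show ?case unfolding m_def by (simp add: mult.commute)
qed

lemma meas_ball: "c \<in> vring av \<Longrightarrow> measure M (B c (av w ^ n)) = av w ^ n"
  using meas_ball0 B_meas by simp

lemma c3: assumes "z = y + d" "av d * av d \<le> e"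
  shows "av y * av z \<le> e \<longleftrightarrow> av y * av y \<le> e"
proof
  have ny: "0 \<le> av y" and nz: "0 \<le> av z" and nd: "0 \<le> av d" using nonneg by auto
  assume h: "av y * av y \<le> e"
  show "av y * av z \<le> e"
  proof (cases "av z \<le> av y")
    case True then show ?thesis using h ny by (meson mult_left_mono order_trans)
  next
    case False
    have "av z \<le> max (av y) (av d)" using ultra assms(1) by simp
    then have "av z \<le> av d" using False by simp
    then have "av y * av z \<le> av d * av d" using False ny nz by (intro mult_mono) auto
    then show ?thesis using assms(2) by simp
  qed
next
  have ny: "0 \<le> av y" and nz: "0 \<le> av z" and nd: "0 \<le> av d" using nonneg by auto
  assume h: "av y * av z \<le> e"
  show "av y * av y \<le> e"
  proof (rule ccontr)
    assume n: "\<not> av y * av y \<le> e"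
    have "av d < av y"
    proof (rule ccontr)
      assume "\<not> av d < av y"
      then have "av y * av y \<le> av d * av d" using ny by (intro mult_mono) auto
      then show False using n assms(2) by simp
    qed
    then have "av z = av y" using strict[of d y] assms(1) by simp
    then show False using h n by simp
  qed
qed

lemma c2: assumes "z = y + d" "0 < av d" "r * av d = e" "r < av d" "0 \<le> r"
  shows "av y * av z \<le> e \<longleftrightarrow> av y \<le> r \<or> av z \<le> r"
proof -
  have ny: "0 \<le> av y" and nz: "0 \<le> av z" using nonneg by auto
  have yz: "av y < av d \<Longrightarrow> av z = av d" using strict[of y d] assms(1) by (simp add: add.commute)
  have zy: "av z < av d \<Longrightarrow> av y = av d"
  proof -
    assume "av z < av d"
    then have "av ((-d) + z) = av (-d)" using strict[of z "-d"] by simp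
    moreover have "y = (-d) + z" using assms(1) by simp
    ultimately show "av y = av d" by simp
  qed
  have gt: "av d < av y \<Longrightarrow> av z = av y" using strict[of d y] assms(1) by simp
  have dd: "e < av d * av d" using assms(3,4,2) by (metis mult_strict_right_mono)
  show ?thesis
  proof
    assume h: "av y * av z \<le> e"
    consider "av y < av d" | "av d < av y" | "av y = av d" by linarith
    then show "av y \<le> r \<or> av z \<le> r"
    proof cases
      case 1
      then have "av y * av d \<le> r * av d" using yz h assms(3) by simp
      then show ?thesis using assms(2) by simp
    next
      case 2
      then have "av d * av d < av y * av y" using assms(2) by (intro mult_strict_mono) auto
      then show ?thesis using gt[OF 2] h dd by simp
    next
      case 3
      show ?thesis
      proof (cases "av z < av d")
        case True
        then have "av z * av d \<le> r * av d" using 3 h assms(3) by (simp add: mult.commute)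
        then show ?thesis using assms(2) by simp
      next
        case False
        then have "av d * av d \<le> av y * av z" using 3 assms(2) by (intro mult_mono) auto
        then show ?thesis using h dd by simp
      qed
    qed
  next
    assume "av y \<le> r \<or> av z \<le> r"
    then show "av y * av z \<le> e"
    proof
      assume a: "av y \<le> r"
      then have "av z = av d" using yz assms(4) by simp
      then have "av y * av z \<le> r * av d" using a assms(2) by (simp add: mult_right_mono)
      then show ?thesis using assms(3) by simp
    next
      assume a: "av z \<le> r"
      then have "av y = av d" using zy assms(4) by simp
      then have "av y * av z \<le> av d * r" using a assms(2) by (simp add: mult_left_mono)
      then show ?thesis using assms(3) by (simp add: mult.commute)
    qed
  qed
qed

end

theorem lemma3p2:
  fixes av :: "'a::field \<Rightarrow> real" and w rho eta b :: 'a and l :: nat and M :: "'a measure"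
  assumes "nonarch_local_field av"
    and "av 2 < 1"
    and "normalized_uniformizer av w"
    and "normalized_haar av M"
    and "rho \<in> vring av"
    and "rho = eta ^ 2 + b"
    and "pideal av b = quadratic_defect av rho"
  defines "X \<equiv> measure M {x \<in> vring av. x ^ 2 - rho \<in> pideal av (w ^ l)}"
  shows "(b \<notin> pideal av (w ^ l) \<longrightarrow> X = 0)
    \<and> (b \<in> pideal av (w ^ l) \<and> av (w ^ l) < av (4 * eta ^ 2)
         \<longrightarrow> X = 2 * av (w ^ l / (2 * eta)))
    \<and> (b \<in> pideal av (w ^ l) \<and> \<not> (av (w ^ l) < av (4 * eta ^ 2))
         \<longrightarrow> X = av w ^ nat \<lceil>real l / 2\<rceil>)"
proof -
  interpret lf av w M using assms(1,3,4) by unfold_locales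
  let ?S = "{x \<in> vring av. x ^ 2 - rho \<in> pideal av (w ^ l)}"
  define e where "e = av w ^ l"
  have pw: "av (w ^ l) = e" unfolding e_def by (simp add: av_power)
  have defect: "\<And>c y. rho - c = y ^ 2 \<Longrightarrow> av b \<le> av c"
  proof -
    fix c y assume cy: "rho - c = y ^ 2"
    have "b \<in> pideal av b" by (simp add: pideal_iff)
    hence "b \<in> quadratic_defect av rho" using assms(7) by simp
    hence "b \<in> pideal av c" unfolding quadratic_defect_def using cy by blast
    thus "av b \<le> av c" by (simp add: pideal_iff)
  qed
  have arho: "av rho \<le> 1" using assms(5) by (simp add: vring_iff)
  have "av b \<le> av rho" using defect[of rho 0] by simp
  then have "av (eta ^ 2) \<le> 1" using ultra_diff[of rho b] assms(6) arho by simp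
  then have "av eta ^ 2 \<le> 1" by (simp add: av_power)
  then have eta_o: "av eta \<le> 1" using nonneg[of eta] by (simp add: power_le_one_iff)
  have memS: "\<And>x. x \<in> ?S \<longleftrightarrow> x \<in> vring av \<and> av (x ^ 2 - rho) \<le> e"
    using pideal_iff pw by simp
  have part1: "b \<notin> pideal av (w ^ l) \<longrightarrow> X = 0"
  proof
    assume "b \<notin> pideal av (w ^ l)"
    then have be: "e < av b" using pideal_iff pw by simp
    have "?S = {}"
    proof (rule ccontr)
      assume "?S \<noteq> {}"
      then obtain x where "x \<in> ?S" by blast
      then have "av (x ^ 2 - rho) \<le> e" using memS by blast
      moreover have "av b \<le> av (rho - x ^ 2)" using defect[of "rho - x ^ 2" x] by simp
      ultimately show False using be av_sym[of rho "x^2"] by simp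
    qed
    then show "X = 0" unfolding X_def by (simp only:) simp
  qed
  have rest: "av b \<le> e \<Longrightarrow> x \<in> ?S \<longleftrightarrow> x \<in> vring av \<and> av (x - eta) * av (x + eta) \<le> e" for x
  proof -
    assume be: "av b \<le> e"
    have id: "x ^ 2 - rho = (x - eta) * (x + eta) - b" using assms(6) by (simp add: algebra_simps power2_eq_square)
    have "av (x ^ 2 - rho) \<le> e \<longleftrightarrow> av ((x - eta) * (x + eta)) \<le> e"
    proof
      assume "av (x ^ 2 - rho) \<le> e"
      moreover have "(x - eta) * (x + eta) = (x ^ 2 - rho) + b" using id by simp
      ultimately show "av ((x - eta) * (x + eta)) \<le> e" using ultra[of "x^2 - rho" b] be by simp
    next
      assume "av ((x - eta) * (x + eta)) \<le> e"
      then show "av (x ^ 2 - rho) \<le> e" using id ultra_diff[of "(x - eta) * (x + eta)" b] be by simp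
    qed
    then show ?thesis using memS mult by simp
  qed
  define t where "t = av (2 * eta)"
  have t4: "av (4 * eta ^ 2) = t * t"
  proof -
    have "4 * eta ^ 2 = (2 * eta) * (2 * eta)" by (simp add: power2_eq_square mult_ac)
    then have "av (4 * eta ^ 2) = av ((2 * eta) * (2 * eta))" by (rule arg_cong)
    then show ?thesis unfolding t_def by (simp only: mult)
  qed
  have zid: "\<And>x. x + eta = (x - eta) + 2 * eta" by simp
  have eo: "eta \<in> vring av" using eta_o vring_iff by simp
  have part3: "b \<in> pideal av (w ^ l) \<and> \<not> (av (w ^ l) < av (4 * eta ^ 2))
         \<longrightarrow> X = av w ^ nat \<lceil>real l / 2\<rceil>"
  proof
    assume h: "b \<in> pideal av (w ^ l) \<and> \<not> (av (w ^ l) < av (4 * eta ^ 2))"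
    then have be: "av b \<le> e" and te: "t * t \<le> e" using pideal_iff pw t4 by auto
    define k where "k = nat \<lceil>real l / 2\<rceil>"
    have kk: "\<And>j. l \<le> 2 * j \<longleftrightarrow> k \<le> j" unfolding k_def by linarith
    have "?S = B eta (av w ^ k)"
    proof (intro set_eqI)
      fix x
      show "x \<in> ?S \<longleftrightarrow> x \<in> B eta (av w ^ k)"
      proof (cases "x \<in> vring av")
        case False then show ?thesis using rest[OF be] by simp
      next
        case True
        let ?y = "x - eta"
        have "x \<in> ?S \<longleftrightarrow> av ?y * av ?y \<le> e" using rest[OF be] True c3[OF zid, of e] te
          unfolding t_def by simp
        also have "\<dots> \<longleftrightarrow> av ?y \<le> av w ^ k"
        proof (cases "?y = 0")
          case True then show ?thesis using e_def w_pos by simp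
        next
          case False
          have "av ?y \<le> 1" using ultra_diff[of x eta] True eta_o by (simp add: vring_iff)
          then obtain j where j: "av ?y = av w ^ j" using val_pow False by blast
          have "av ?y * av ?y = av w ^ (2 * j)" using j by (simp add: power_mult power2_eq_square[symmetric] mult.commute)
          then show ?thesis using j e_def w_pos w_props(1) kk[of j] by (simp add: power_decreasing_iff)
        qed
        finally show ?thesis using True by simp
      qed
    qed
    then show "X = av w ^ nat \<lceil>real l / 2\<rceil>" unfolding X_def k_def using meas_ball eo by simp
  qed
  have part2: "b \<in> pideal av (w ^ l) \<and> av (w ^ l) < av (4 * eta ^ 2)
         \<longrightarrow> X = 2 * av (w ^ l / (2 * eta))"
  proof
    assume h: "b \<in> pideal av (w ^ l) \<and> av (w ^ l) < av (4 * eta ^ 2)"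
    then have be: "av b \<le> e" and te: "e < t * t" using pideal_iff pw t4 by auto
    have e_pos: "0 < e" using e_def w_pos by simp
    have tpos: "0 < t" using te e_pos nonneg[of "2 * eta"] unfolding t_def
      by (metis less_eq_real_def mult_zero_left not_less_iff_gr_or_eq)
    have "t \<le> 1" unfolding t_def using mult[of 2 eta] assms(2) eta_o nonneg[of 2] nonneg[of eta]
      by (simp add: mult_le_one)
    then obtain j where j: "t = av w ^ j" using val_pow tpos unfolding t_def
      by (metis less_irrefl zero_iff)
    have "av w ^ l < av w ^ (2 * j)" using te j e_def by (simp add: power_mult power2_eq_square[symmetric] mult.commute)
    then have jl: "2 * j < l" using w_pos w_props(1) by (simp add: power_strict_decreasing_iff)
    define r where "r = av w ^ (l - j)"
    have rt: "r * t = e" unfolding r_def j e_def using jl by (simp add: power_add[symmetric])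
    have rlt: "r < t" unfolding r_def j using jl w_pos w_props(1) by (simp add: power_strict_decreasing_iff)
    have r0: "0 \<le> r" unfolding r_def using w_pos by simp
    have Seq: "?S = B eta r \<union> B (-eta) r"
    proof (intro set_eqI)
      fix x
      have "x \<in> ?S \<longleftrightarrow> x \<in> vring av \<and> (av (x - eta) \<le> r \<or> av (x + eta) \<le> r)"
        using rest[OF be] c2[OF zid, of r e] tpos rt rlt r0 unfolding t_def by simp
      then show "x \<in> ?S \<longleftrightarrow> x \<in> B eta r \<union> B (-eta) r" by auto
    qed
    have disj: "B eta r \<inter> B (-eta) r = {}"
    proof (rule ccontr)
      assume "B eta r \<inter> B (-eta) r \<noteq> {}"
      then obtain x where x: "av (x - eta) \<le> r" "av (x + eta) \<le> r" by auto
      have "2 * eta = (x + eta) - (x - eta)" by simp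
      then have "t \<le> max (av (x + eta)) (av (x - eta))" unfolding t_def by (metis ultra_diff)
      then show False using x rlt by simp
    qed
    have meo: "- eta \<in> vring av" using eo by (simp add: vring_iff)
    interpret finite_measure M by (rule fm)
    have "X = measure M (B eta r) + measure M (B (-eta) r)"
      unfolding X_def Seq by (rule finite_measure_Union[OF B_sets[OF eo] B_sets[OF meo] disj])
    also have "\<dots> = 2 * r" unfolding r_def meas_ball[OF eo] meas_ball[OF meo] by simp
    also have "r = av (w ^ l / (2 * eta))" using rt tpos unfolding t_def by (simp add: av_divide pw field_simps)
    finally show "X = 2 * av (w ^ l / (2 * eta))" .
  qed
  show ?thesis using part1 part2 part3 by blast
qed

end
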